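(* Let $P=\Bbbk[x_1,x_2,x_3]$ with Poisson bracket $\{x_1,x_2\}=0$, $\{x_2,x_3\}=3x_1^2$, $\{x_3,x_1\}=0$. If $G$ is a nontrivial finite subgroup of $\mathrm{PAut}_{\mathrm{gr}}(P)$ generated by Poisson reflections, then the invariant subalgebra $P^G$ is not isomorphic to $P$ as Poisson algebras.
   Context: $\Bbbk$ is algebraically closed of characteristic $0$; $P$ has the standard grading. $\mathrm{PAut}_{\mathrm{gr}}(P)$ is the group of degree-preserving bijective algebra homomorphisms preserving the bracket. A Poisson reflection is a finite-order $\phi\in\mathrm{PAut}_{\mathrm{gr}}(P)$ such that $\phi|_{P_1}$ has eigenvalues $1,1,\xi$ with $\xi\neq1$ a primitive root of unity. $P^G=\{a\in P:\phi(a)=a\ \forall \phi\in G\}$ with the restricted bracket. *)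

theory Defs
  imports "HOL-Library.Poly_Mapping" "HOL-Library.Numeral_Type" "Jordan_Normal_Form.Char_Poly"
begin

text \<open>The polynomial ring P = k[x1,x2,x3]: finitely supported maps from exponent vectors
  (monomials in the three variables indexed by the type 3 = {0,1,2}) to coefficients.
  Variable x1 is index 0, x2 is index 1, x3 is index 2.\<close>

type_synonym 'a P3 = "(3 \<Rightarrow>\<^sub>0 nat) \<Rightarrow>\<^sub>0 'a"

definition Var :: "3 \<Rightarrow> 'a::comm_ring_1 P3" where
  "Var i = Poly_Mapping.single (Poly_Mapping.single i 1) 1"

definition Const :: "'a::comm_ring_1 \<Rightarrow> 'a P3" where
  "Const c = Poly_Mapping.single 0 c"

definition mon_deg :: "(3 \<Rightarrow>\<^sub>0 nat) \<Rightarrow> nat" where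
  "mon_deg m = (\<Sum>i\<in>UNIV. Poly_Mapping.lookup m i)"

definition homog :: "nat \<Rightarrow> 'a::comm_ring_1 P3 set" where
  "homog d = {p. \<forall>m\<in>Poly_Mapping.keys p. mon_deg m = d}"

definition poisson_bracket :: "('a::comm_ring_1 P3 \<Rightarrow> 'a P3 \<Rightarrow> 'a P3) \<Rightarrow> bool" where
  "poisson_bracket br \<longleftrightarrow>
     (\<forall>a b c. br (a + b) c = br a c + br b c) \<and>
     (\<forall>a c s. br (Const s * a) c = Const s * br a c) \<and>
     (\<forall>a b. br a b = - br b a) \<and>
     (\<forall>a b c. br a (b * c) = br a b * c + b * br a c) \<and>
     (\<forall>a b c. br a (br b c) + br b (br c a) + br c (br a b) = 0)"

definition PAut_gr :: "('a::comm_ring_1 P3 \<Rightarrow> 'a P3 \<Rightarrow> 'a P3) \<Rightarrow> ('a P3 \<Rightarrow> 'a P3) set" where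
  "PAut_gr br = {\<phi>. bij \<phi> \<and>
     (\<forall>a b. \<phi> (a + b) = \<phi> a + \<phi> b) \<and>
     (\<forall>a b. \<phi> (a * b) = \<phi> a * \<phi> b) \<and>
     (\<forall>c. \<phi> (Const c) = Const c) \<and>
     (\<forall>d. \<forall>p\<in>homog d. \<phi> p \<in> homog d) \<and>
     (\<forall>a b. \<phi> (br a b) = br (\<phi> a) (\<phi> b))}"

text \<open>Matrix of \<phi> restricted to P_1 with respect to the basis x1,x2,x3:
  column j holds the coordinates of \<phi>(x_(j+1)).\<close>
definition lin_matrix :: "('a::comm_ring_1 P3 \<Rightarrow> 'a P3) \<Rightarrow> 'a mat" where
  "lin_matrix \<phi> = mat 3 3 (\<lambda>(i, j).
      Poly_Mapping.lookup (\<phi> (Var (of_nat j))) (Poly_Mapping.single (of_nat i :: 3) 1))"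

definition poisson_reflection ::
  "('a::comm_ring_1 P3 \<Rightarrow> 'a P3 \<Rightarrow> 'a P3) \<Rightarrow> ('a P3 \<Rightarrow> 'a P3) \<Rightarrow> bool" where
  "poisson_reflection br \<phi> \<longleftrightarrow> \<phi> \<in> PAut_gr br \<and> (\<exists>n>0. \<phi> ^^ n = id) \<and>
     (\<exists>\<xi>. \<xi> \<noteq> 1 \<and> (\<exists>k>0. \<xi> ^ k = 1) \<and>
          char_poly (lin_matrix \<phi>) = [:-1, 1:] ^ 2 * [:-\<xi>, 1:])"

text \<open>Subgroup generated by a set R of automorphisms of finite order (the monoid generated
  by R under composition; inverses are powers).\<close>
inductive_set gen_by :: "('b \<Rightarrow> 'b) set \<Rightarrow> ('b \<Rightarrow> 'b) set" for R where
  gen_id: "id \<in> gen_by R"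
| gen_step: "r \<in> R \<Longrightarrow> g \<in> gen_by R \<Longrightarrow> r \<circ> g \<in> gen_by R"

definition invariants :: "('b \<Rightarrow> 'b) set \<Rightarrow> 'b set" where
  "invariants G = {a. \<forall>\<phi>\<in>G. \<phi> a = a}"

definition poisson_iso_onto_P ::
  "('a::comm_ring_1 P3 \<Rightarrow> 'a P3 \<Rightarrow> 'a P3) \<Rightarrow> 'a P3 set \<Rightarrow> ('a P3 \<Rightarrow> 'a P3) \<Rightarrow> bool" where
  "poisson_iso_onto_P br A \<psi> \<longleftrightarrow> bij_betw \<psi> A UNIV \<and>
     (\<forall>a\<in>A. \<forall>b\<in>A. \<psi> (a + b) = \<psi> a + \<psi> b) \<and>
     (\<forall>a\<in>A. \<forall>b\<in>A. \<psi> (a * b) = \<psi> a * \<psi> b) \<and>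
     (\<forall>c. \<psi> (Const c) = Const c) \<and>
     (\<forall>a\<in>A. \<forall>b\<in>A. \<psi> (br a b) = br (\<psi> a) (\<psi> b))"

end

theory Submission
  imports Defs
begin

lemma det1:
  fixes A :: "'a::comm_ring_1 mat"
  assumes "A \<in> carrier_mat 1 1"
  shows "det A = A$$(0,0)"
proof -
  have "det A = (\<Sum>i<1. A $$ (i,0) * cofactor A i 0)"
    by (rule laplace_expansion_column[OF assms]) simp
  moreover have "mat_delete A 0 0 \<in> carrier_mat 0 0" using assms by (simp add: mat_delete_def)
  ultimately show ?thesis using assms by (simp add: cofactor_def)
qed
lemma det2:
  fixes A :: "'a::comm_ring_1 mat"
  assumes "A \<in> carrier_mat 2 2"
  shows "det A = A$$(0,0) * A$$(1,1) - A$$(1,0) * A$$(0,1)"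
proof -
  have "det A = (\<Sum>i<2. A $$ (i,0) * cofactor A i 0)"
    by (rule laplace_expansion_column[OF assms]) simp
  then show ?thesis using assms by (simp add: cofactor_def eval_nat_numeral lessThan_Suc det1 mat_delete_def insert_index_def)
qed
lemma det3:
  fixes A :: "'a::comm_ring_1 mat"
  assumes "A \<in> carrier_mat 3 3"
  shows "det A = A$$(0,0) * (A$$(1,1) * A$$(2,2) - A$$(2,1)*A$$(1,2))
     - A$$(1,0) * (A$$(0,1) * A$$(2,2) - A$$(2,1)*A$$(0,2))
     + A$$(2,0) * (A$$(0,1) * A$$(1,2) - A$$(1,1)*A$$(0,2))"
proof -
  have "det A = (\<Sum>i<3. A $$ (i,0) * cofactor A i 0)"
    by (rule laplace_expansion_column[OF assms]) simp
  then show ?thesis using assms by (simp add: cofactor_def eval_nat_numeral lessThan_Suc det2 mat_delete_def insert_index_def algebra_simps)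
qed



lemma update_eq_add: "a \<notin> Poly_Mapping.keys f \<Longrightarrow> Poly_Mapping.update a b f = f + Poly_Mapping.single a b"
  by (rule poly_mapping_eqI) (auto simp add: lookup_update lookup_add lookup_single in_keys_iff when_def)

lemma Const_0[simp]: "Const 0 = 0" by (simp add: Const_def)
lemma Const_1[simp]: "Const 1 = 1" by (simp add: Const_def)
lemma Const_add: "Const (a + b) = Const a + Const b" by (simp add: Const_def single_add)
lemma Const_mult: "Const (a * b) = Const a * Const b" by (simp add: Const_def mult_single)
lemma Const_minus: "Const (- a) = - Const a" by (simp add: Const_def single_uminus)
lemma Const_diff: "Const (a - b) = Const a - Const b" by (simp add: Const_def single_diff)
lemma Const_mult_single: "Const c * Poly_Mapping.single m d = Poly_Mapping.single m (c * d)"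
  by (simp add: Const_def mult_single)
lemma Const_pow: "Const (a ^ n) = Const a ^ n"
  by (induction n) (simp_all add: Const_mult)

lemma single_Var_pow: "Poly_Mapping.single (Poly_Mapping.single i k) (1::'a::comm_ring_1) = Var i ^ k"
proof (induction k)
  case 0 then show ?case by simp
next
  case (Suc k)
  have "Poly_Mapping.single (Poly_Mapping.single i (Suc k)) (1::'a)
      = Poly_Mapping.single (Poly_Mapping.single i 1 + Poly_Mapping.single i k) (1 * 1)"
    by (simp add: single_add[symmetric])
  also have "\<dots> = Poly_Mapping.single (Poly_Mapping.single i 1) 1 * Poly_Mapping.single (Poly_Mapping.single i k) (1::'a)"
    by (simp only: mult_single)
  also have "\<dots> = Var i * Var i ^ k" by (simp only: Suc Var_def)
  finally show ?case by simp
qed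

lemma P3_induct:
  fixes Q :: "'a::comm_ring_1 P3 \<Rightarrow> bool"
  assumes C: "\<And>c. Q (Const c)" and V: "\<And>i. Q (Var i)"
    and A: "\<And>p q. Q p \<Longrightarrow> Q q \<Longrightarrow> Q (p + q)"
    and M: "\<And>p q. Q p \<Longrightarrow> Q q \<Longrightarrow> Q (p * q)"
  shows "Q p"
proof -
  have pw: "Q (Var i ^ k)" for i k
    by (induction k) (use C[of 1] V M in auto)
  have mon: "Q (Poly_Mapping.single m 1)" for m
  proof (induction m rule: update_induct)
    case const then show ?case using C[of 1] by (simp add: Const_def)
  next
    case (update f a b)
    have "Poly_Mapping.single (Poly_Mapping.update a b f) (1::'a)
        = Poly_Mapping.single f 1 * Var a ^ b"
      by (simp add: update_eq_add[OF update(1)] mult_single single_Var_pow[symmetric])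
    then show ?case using M[OF update(3) pw] by simp
  qed
  show ?thesis
  proof (induction p rule: update_induct)
    case const then show ?case using C[of 0] by simp
  next
    case (update f a b)
    have "Poly_Mapping.update a b f = f + Const b * Poly_Mapping.single a 1"
      by (simp add: update_eq_add[OF update(1)] Const_mult_single)
    then show ?case using A[OF update(3) M[OF C mon]] by simp
  qed
qed

lemma P3_idom_test: "(p::'a::field P3) * q = 0 \<Longrightarrow> p = 0 \<or> q = 0" by simp



lemma exhaust3: fixes x :: 3 shows "x = 0 \<or> x = 1 \<or> x = 2"
proof (induct x)
  case (of_int z)
  then have "z = 0 \<or> z = 1 \<or> z = 2" by fastforce
  then show ?case by auto
qed

lemma UNIV3: "(UNIV :: 3 set) = {0,1,2}" using exhaust3 by auto

lemma sum3: "(\<Sum>i\<in>UNIV. f i) = f 0 + f 1 + f (2::3)"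
proof -
  have a: "(0::3) \<notin> {1,2}" "(1::3) \<notin> {2}" by simp_all
  show ?thesis unfolding UNIV3 by (simp only: sum.insert[OF _ a(1)] sum.insert[OF _ a(2)] finite.intros sum.empty finite_insert add.assoc add_0_right) simp
qed

lemma distinct3: "(0::3) \<noteq> 1" "(0::3) \<noteq> 2" "(1::3) \<noteq> 2" by simp_all

definition L :: "'a::comm_ring_1 \<Rightarrow> 'a \<Rightarrow> 'a \<Rightarrow> 'a P3" where
  "L c0 c1 c2 = Const c0 * Var 0 + Const c1 * Var 1 + Const c2 * Var 2"

lemma Const_Var: "Const c * Var i = Poly_Mapping.single (Poly_Mapping.single i 1) c"
  by (simp add: Var_def Const_mult_single)

lemma Const_x0sq: "Const c * Var 0 ^ 2 = Poly_Mapping.single (Poly_Mapping.single 0 2) c"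
  by (simp add: single_Var_pow[symmetric] Const_mult_single)

lemma Const_x0sq_eq0: "Const c * Var 0 ^ 2 = (0::'a::comm_ring_1 P3) \<Longrightarrow> c = 0"
  by (metis Const_x0sq lookup_single_eq lookup_zero)

lemma single_3_eq: "Poly_Mapping.single (i::3) (1::nat) = Poly_Mapping.single j 1 \<longleftrightarrow> i = j"
  by (metis lookup_single_eq lookup_single_not_eq one_neq_zero)

lemma single_3_eq'[simp]: "Poly_Mapping.single (i::3) (Suc 0) = Poly_Mapping.single j (Suc 0) \<longleftrightarrow> i = j"
  using single_3_eq by simp

lemma lookup_L: "Poly_Mapping.lookup (L c0 c1 c2) m =
   (if m = Poly_Mapping.single 0 1 then c0 else 0) + (if m = Poly_Mapping.single 1 1 then c1 else 0)
   + (if m = Poly_Mapping.single 2 1 then c2 else 0)"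
  by (simp add: L_def Const_Var lookup_add lookup_single when_def)

lemma lookup_L0: "Poly_Mapping.lookup (L c0 c1 c2) (Poly_Mapping.single 0 1) = c0"
  and lookup_L1: "Poly_Mapping.lookup (L c0 c1 c2) (Poly_Mapping.single 1 1) = c1"
  and lookup_L2: "Poly_Mapping.lookup (L c0 c1 c2) (Poly_Mapping.single 2 1) = c2"
  by (simp_all add: lookup_L single_3_eq)

lemma L_inj: "L a0 a1 a2 = L b0 b1 b2 \<Longrightarrow> a0 = b0 \<and> a1 = b1 \<and> a2 = b2"
  by (metis lookup_L0 lookup_L1 lookup_L2)

lemma mon_deg1: assumes "mon_deg m = 1" shows "\<exists>i. m = Poly_Mapping.single i 1"
proof -
  have s: "Poly_Mapping.lookup m 0 + Poly_Mapping.lookup m 1 + Poly_Mapping.lookup m 2 = 1"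
    using assms unfolding mon_deg_def sum3 .
  have e: "m = Poly_Mapping.single i 1" if "Poly_Mapping.lookup m i = 1"
     "\<And>j. j \<noteq> i \<Longrightarrow> Poly_Mapping.lookup m j = 0" for i
    by (rule poly_mapping_eqI) (use that in \<open>auto simp: lookup_single when_def\<close>)
  have "(Poly_Mapping.lookup m 0 = 1 \<and> Poly_Mapping.lookup m 1 = 0 \<and> Poly_Mapping.lookup m 2 = 0) \<or>
        (Poly_Mapping.lookup m 0 = 0 \<and> Poly_Mapping.lookup m 1 = 1 \<and> Poly_Mapping.lookup m 2 = 0) \<or>
        (Poly_Mapping.lookup m 0 = 0 \<and> Poly_Mapping.lookup m 1 = 0 \<and> Poly_Mapping.lookup m 2 = 1)"
    using s by linarith
  then show ?thesis
  proof (elim disjE conjE)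
    assume h: "Poly_Mapping.lookup m 0 = 1" "Poly_Mapping.lookup m 1 = 0" "Poly_Mapping.lookup m 2 = 0"
    have "\<And>j. j \<noteq> 0 \<Longrightarrow> Poly_Mapping.lookup m j = 0"
      subgoal for j using exhaust3[of j] h by (elim disjE) simp_all done
    then show ?thesis using e[of 0] h by blast
  next
    assume h: "Poly_Mapping.lookup m 0 = 0" "Poly_Mapping.lookup m 1 = 1" "Poly_Mapping.lookup m 2 = 0"
    have "\<And>j. j \<noteq> 1 \<Longrightarrow> Poly_Mapping.lookup m j = 0"
      subgoal for j using exhaust3[of j] h by (elim disjE) simp_all done
    then show ?thesis using e[of 1] h by blast
  next
    assume h: "Poly_Mapping.lookup m 0 = 0" "Poly_Mapping.lookup m 1 = 0" "Poly_Mapping.lookup m 2 = 1"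
    have "\<And>j. j \<noteq> 2 \<Longrightarrow> Poly_Mapping.lookup m j = 0"
      subgoal for j using exhaust3[of j] h by (elim disjE) simp_all done
    then show ?thesis using e[of 2] h by blast
  qed
qed

lemma homog1_L:
  assumes "(p::'a::comm_ring_1 P3) \<in> homog 1"
  shows "p = L (Poly_Mapping.lookup p (Poly_Mapping.single 0 1)) (Poly_Mapping.lookup p (Poly_Mapping.single 1 1))
             (Poly_Mapping.lookup p (Poly_Mapping.single 2 1))"
proof (rule poly_mapping_eqI)
  fix m
  show "Poly_Mapping.lookup p m = Poly_Mapping.lookup (L (Poly_Mapping.lookup p (Poly_Mapping.single 0 1)) (Poly_Mapping.lookup p (Poly_Mapping.single 1 1))
             (Poly_Mapping.lookup p (Poly_Mapping.single 2 1))) m"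
  proof (cases "m \<in> Poly_Mapping.keys p")
    case True
    then have "mon_deg m = 1" using assms by (simp add: homog_def)
    then obtain i where "m = Poly_Mapping.single i 1" using mon_deg1 by blast
    then show ?thesis using exhaust3[of i]
      by (elim disjE) (simp_all only: lookup_L0 lookup_L1 lookup_L2)
  next
    case False
    then have "Poly_Mapping.lookup p m = 0" by (simp add: in_keys_iff)
    then show ?thesis unfolding lookup_L
      by (cases "m = Poly_Mapping.single 0 1"; cases "m = Poly_Mapping.single 1 1"; cases "m = Poly_Mapping.single 2 1"; simp)
  qed
qed

lemma mon_deg_single: "mon_deg (Poly_Mapping.single i k) = k"
  unfolding mon_deg_def lookup_single when_def by (simp only: sum.delta' finite UNIV_I if_True)

lemma Var_homog1: "Var i \<in> homog 1"
  unfolding homog_def Var_def by (simp add: mon_deg_single)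
    



locale PB =
  fixes br :: "'a::field_char_0 P3 \<Rightarrow> 'a P3 \<Rightarrow> 'a P3"
  assumes pb: "poisson_bracket br"
    and b12: "br (Var 0) (Var 1) = 0"
    and b23: "br (Var 1) (Var 2) = Const 3 * Var 0 ^ 2"
    and b31: "br (Var 2) (Var 0) = 0"
begin

lemma add1: "br (a + b) c = br a c + br b c" using pb unfolding poisson_bracket_def by blast
lemma sc1: "br (Const s * a) c = Const s * br a c" using pb unfolding poisson_bracket_def by blast
lemma anti: "br a b = - br b a" using pb unfolding poisson_bracket_def by blast
lemma leib2: "br a (b * c) = br a b * c + b * br a c" using pb unfolding poisson_bracket_def by blast

lemma add2: "br a (b + c) = br a b + br a c"
  by (metis add1 anti minus_add_distrib)
lemma sc2: "br a (Const s * c) = Const s * br a c"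
  by (metis sc1 anti mult_minus_right)
lemma leib1: "br (a * b) c = br a c * b + a * br b c"
proof -
  have "br (a * b) c = - br c (a * b)" by (rule anti)
  also have "\<dots> = - (br c a * b + a * br c b)" by (simp only: leib2)
  also have "\<dots> = br a c * b + a * br b c" by (simp add: anti[of c a] anti[of c b])
  finally show ?thesis .
qed
lemma zero1[simp]: "br 0 c = 0" by (metis add1 add_0 add_cancel_right_right)
lemma zero2[simp]: "br c 0 = 0" by (metis anti zero1 neg_equal_0_iff_equal)
lemma neg1: "br (- a) c = - br a c" by (metis add1 add.right_inverse zero1 add_eq_0_iff)
lemma neg2: "br c (- a) = - br c a" by (metis anti neg1 minus_minus)
lemma diff1: "br (a - b) c = br a c - br b c" by (simp only: diff_conv_add_uminus add1 neg1)
lemma diff2: "br c (a - b) = br c a - br c b" by (simp only: diff_conv_add_uminus add2 neg2)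
lemma self[simp]: "br a a = 0"
proof -
  have h: "br a a = - br a a" by (rule anti)
  have "br a a + br a a = - br a a + br a a" using h by (rule arg_cong[where f="\<lambda>y. y + br a a"])
  then have "br a a + br a a = 0" by simp
  then have "2 * br a a = 0" by (simp only: mult_2)
  then show ?thesis by simp
qed
lemma one1[simp]: "br 1 c = 0"
proof -
  have "br 1 c = br 1 c + br 1 c" using leib1[of 1 1 c] by simp
  then show ?thesis by simp
qed
lemma const1[simp]: "br (Const s) c = 0" using sc1[of s 1 c] by simp
lemma const2[simp]: "br c (Const s) = 0" by (metis anti const1 neg_equal_0_iff_equal)

lemma b32: "br (Var 2) (Var 1) = - (Const 3 * Var 0 ^ 2)" by (metis anti b23)
lemma b13: "br (Var 0) (Var 2) = 0" by (metis anti b31 neg_equal_0_iff_equal)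
lemma b21: "br (Var 1) (Var 0) = 0" by (metis anti b12 neg_equal_0_iff_equal)

lemma cas: "br (Var 0) q = 0"
proof (induction q rule: P3_induct)
  case (2 i) then show ?case using exhaust3[of i] b12 b13 by auto
qed (simp_all add: add2 leib2)

lemma cas2: "br q (Var 0) = 0" by (metis anti cas neg_equal_0_iff_equal)

lemma br_L: "br (L a0 a1 a2) (L b0 b1 b2) = Const (3 * (a1 * b2 - a2 * b1)) * Var 0 ^ 2"
  by (simp add: L_def add1 add2 sc1 sc2 cas cas2 b23 b32 Const_mult Const_diff algebra_simps)

definition Dx :: "'a P3 \<Rightarrow> bool" where "Dx p \<longleftrightarrow> (\<exists>q. p = Var 0 ^ 2 * q)"

lemma Dx_add: "Dx p \<Longrightarrow> Dx q \<Longrightarrow> Dx (p + q)"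
  unfolding Dx_def by (metis distrib_left)
lemma Dx_multl: "Dx p \<Longrightarrow> Dx (q * p)"
  unfolding Dx_def by (metis mult.left_commute)
lemma Dx_multr: "Dx p \<Longrightarrow> Dx (p * q)"
  unfolding Dx_def by (metis mult.assoc)
lemma Dx_0: "Dx 0" unfolding Dx_def by (metis mult_zero_right)
lemma Dx_neg: "Dx p \<Longrightarrow> Dx (- p)" unfolding Dx_def by (metis mult_minus_right)

lemma Dx_Var: "Dx (br (Var i) q)"
proof (induction q rule: P3_induct)
  case (2 j)
  have "Dx (Const 3 * Var 0 ^ 2)" unfolding Dx_def by (metis mult.commute)
  then show ?case using exhaust3[of i] exhaust3[of j] b12 b13 b21 b23 b31 b32 Dx_0 Dx_neg
    by (elim disjE) (simp_all add: cas cas2)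
qed (simp_all add: add2 leib2 Dx_0 Dx_add Dx_multl Dx_multr)

lemma Dx_br: "Dx (br p q)"
proof (induction p arbitrary: q rule: P3_induct)
  case (2 i) then show ?case by (rule Dx_Var)
qed (simp_all add: add1 leib1 Dx_0 Dx_add Dx_multl Dx_multr)

end



lemma L_add: "L a0 a1 a2 + L b0 b1 b2 = L (a0 + b0) (a1 + b1) (a2 + b2)"
  by (simp add: L_def Const_add algebra_simps)
lemma L_smult: "Const c * L a0 a1 a2 = L (c * a0) (c * a1) (c * a2)"
  by (simp add: L_def Const_mult algebra_simps)
lemma Var_L: "Var 0 = L 1 0 0" "Var 1 = L 0 1 0" "Var 2 = L 0 0 1"
  by (simp_all add: L_def)

context PB begin

lemma Const_x0sq_inj: "Const c * Var 0 ^ 2 = Const d * (Var 0 ^ 2 :: 'a P3) \<Longrightarrow> c = d"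
  by (metis Const_x0sq lookup_single_eq)

lemma hom_facts:
  assumes "\<phi> \<in> PAut_gr br"
  shows "\<phi> (a + b) = \<phi> a + \<phi> b" "\<phi> (a * b) = \<phi> a * \<phi> b" "\<phi> (Const c) = Const c"
    "\<phi> (br a b) = br (\<phi> a) (\<phi> b)" "bij \<phi>" "p \<in> homog d \<Longrightarrow> \<phi> p \<in> homog d"
  using assms unfolding PAut_gr_def by blast+

lemma hom_more:
  assumes "\<phi> \<in> PAut_gr br"
  shows "\<phi> 0 = 0" "\<phi> 1 = 1" "\<phi> (- a) = - \<phi> a" "\<phi> (Const c * a) = Const c * \<phi> a"
    "\<phi> (a ^ n) = \<phi> a ^ n"
proof -
  show z: "\<phi> 0 = 0" using hom_facts(3)[OF assms, of 0] by simp
  show o: "\<phi> 1 = 1" using hom_facts(3)[OF assms, of 1] by simp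
  show "\<phi> (- a) = - \<phi> a" using hom_facts(1)[OF assms, of a "- a"] z
    by (simp add: eq_neg_iff_add_eq_0 add.commute)
  show "\<phi> (Const c * a) = Const c * \<phi> a" using hom_facts(2,3)[OF assms] by simp
  show "\<phi> (a ^ n) = \<phi> a ^ n"
    by (induction n) (simp_all add: o hom_facts(2)[OF assms])
qed

lemma hom_L:
  assumes "\<phi> \<in> PAut_gr br"
  shows "\<phi> (L c0 c1 c2) = Const c0 * \<phi> (Var 0) + Const c1 * \<phi> (Var 1) + Const c2 * \<phi> (Var 2)"
  by (simp add: L_def hom_facts(1)[OF assms] hom_more(4)[OF assms])

end



lemma lin_matrix_carrier: "lin_matrix \<phi> \<in> carrier_mat 3 3" by (simp add: lin_matrix_def)

lemma cpm_entry:
  fixes \<phi> :: "'a::comm_ring_1 P3 \<Rightarrow> 'a P3"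
  assumes "i < 3" "j < 3"
  shows "poly (char_poly_matrix (lin_matrix \<phi>) $$ (i, j)) x =
    (if i = j then x else 0) - Poly_Mapping.lookup (\<phi> (Var (of_nat j))) (Poly_Mapping.single (of_nat i) 1)"
  using assms by (simp add: char_poly_matrix_def lin_matrix_def)

lemma char_poly_lin:
  fixes \<phi> :: "'a::comm_ring_1 P3 \<Rightarrow> 'a P3"
  defines "A \<equiv> \<lambda>i j. Poly_Mapping.lookup (\<phi> (Var j)) (Poly_Mapping.single i 1)"
  shows "poly (char_poly (lin_matrix \<phi>)) x =
     (x - A 0 0) * ((x - A 1 1) * (x - A 2 2) - A 2 1 * A 1 2)
     - (- A 1 0) * ((- A 0 1) * (x - A 2 2) - (- A 2 1) * (- A 0 2))
     + (- A 2 0) * ((- A 0 1) * (- A 1 2) - (x - A 1 1) * (- A 0 2))"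
proof -
  have c: "char_poly_matrix (lin_matrix \<phi>) \<in> carrier_mat 3 3" by (rule char_poly_matrix_closed[OF lin_matrix_carrier])
  show ?thesis unfolding char_poly_def det3[OF c]
    by (simp only: poly_mult poly_add poly_diff cpm_entry A_def, simp)
qed
context PB begin

lemma refl_form:
  assumes R: "poisson_reflection br r"
  shows "\<exists>a a'. r (Var 0) = - Var 0 \<and> r (Var 1) = Var 1 + Const a * Var 0 \<and> r (Var 2) = Var 2 + Const a' * Var 0"
proof -
  have H: "r \<in> PAut_gr br" and ord: "\<exists>n>0. r ^^ n = id"
    and xi: "\<exists>\<xi>. \<xi> \<noteq> 1 \<and> (\<exists>k>0. \<xi> ^ k = 1) \<and> char_poly (lin_matrix r) = [:-1, 1:] ^ 2 * [:-\<xi>, 1:]"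
    using R unfolding poisson_reflection_def by blast+
  define A where "A i j = Poly_Mapping.lookup (r (Var j)) (Poly_Mapping.single i 1)" for i j :: 3
  have rV: "r (Var j) = L (A 0 j) (A 1 j) (A 2 j)" for j
    unfolding A_def by (rule homog1_L[OF hom_facts(6)[OF H Var_homog1]])
  have cen: "br (r (Var 0)) q = 0" for q
  proof -
    obtain q' where q: "q = r q'" using bij_is_surj[OF hom_facts(5)[OF H]] by (metis surj_f_inv_f)
    show ?thesis unfolding q hom_facts(4)[OF H, symmetric] cas hom_more(1)[OF H] ..
  qed
  have "Const (3 * (A 1 0 * 1 - A 2 0 * 0)) * Var 0 ^ 2 = 0"
    using cen[of "Var 2"] unfolding rV Var_L(3) br_L .
  then have A10: "A 1 0 = 0" using Const_x0sq_eq0 by fastforce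
  have "Const (3 * (A 1 0 * 0 - A 2 0 * 1)) * Var 0 ^ 2 = 0"
    using cen[of "Var 1"] unfolding rV Var_L(2) br_L .
  then have A20: "A 2 0 = 0" using Const_x0sq_eq0 by fastforce
  have "br (r (Var 1)) (r (Var 2)) = r (Const 3 * Var 0 ^ 2)"
    by (simp only: hom_facts(4)[OF H, symmetric] b23)
  also have "\<dots> = Const 3 * (r (Var 0)) ^ 2" by (simp only: hom_more(4,5)[OF H])
  also have "\<dots> = Const (3 * A 0 0 ^ 2) * Var 0 ^ 2"
  proof -
    have r0: "r (Var 0) = Const (A 0 0) * Var 0" by (simp add: rV A10 A20 L_def)
    show ?thesis by (simp only: r0 power_mult_distrib Const_pow[symmetric] Const_mult mult.assoc)
  qed
  finally have c1: "br (r (Var 1)) (r (Var 2)) = Const (3 * A 0 0 ^ 2) * Var 0 ^ 2" .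
  have c2: "br (r (Var 1)) (r (Var 2)) = Const (3 * (A 1 1 * A 2 2 - A 2 1 * A 1 2)) * Var 0 ^ 2"
    by (simp only: rV br_L)
  have "Const (3 * (A 1 1 * A 2 2 - A 2 1 * A 1 2)) * Var 0 ^ 2 = Const (3 * A 0 0 ^ 2) * Var 0 ^ 2"
    using trans[OF c2[symmetric] c1] .
  then have "3 * (A 1 1 * A 2 2 - A 2 1 * A 1 2) = 3 * A 0 0 ^ 2" by (rule Const_x0sq_inj)
  then have det: "A 1 1 * A 2 2 - A 2 1 * A 1 2 = A 0 0 ^ 2" by (subst (asm) mult_left_cancel) simp_all
  obtain \<xi> k where xi1: "\<xi> \<noteq> 1" and k: "k > 0" "\<xi> ^ k = 1"
    and cp: "char_poly (lin_matrix r) = [:-1, 1:] ^ 2 * [:-\<xi>, 1:]" using xi by blast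
  have E: "(x - A 0 0) * ((x - A 1 1) * (x - A 2 2) - A 2 1 * A 1 2) = (x - 1)^2 * (x - \<xi>)" for x
  proof -
    have "poly (char_poly (lin_matrix r)) x = (x - 1)^2 * (x - \<xi>)" unfolding cp by (simp add: left_diff_distrib[symmetric] mult.commute)
    then show ?thesis unfolding char_poly_lin A_def[symmetric] A10 A20 by (simp add: algebra_simps)
  qed
  have xi0: "\<xi> \<noteq> 0" using k by (metis power_0_left zero_neq_one neq0_conv)
  have x0: "\<xi> = A 0 0 ^ 3"
  proof -
    have "(0 - A 0 0) * ((0 - A 1 1) * (0 - A 2 2) - A 2 1 * A 1 2) = (0 - 1)^2 * (0 - \<xi>)" by (rule E)
    then have "A 0 0 * (A 1 1 * A 2 2 - A 2 1 * A 1 2) = \<xi>" by (simp add: algebra_simps)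
    then show ?thesis unfolding det by (simp add: power3_eq_cube power2_eq_square mult.assoc)
  qed
  have "(A 0 0 - 1)^2 * (A 0 0 - \<xi>) = 0" using E[of "A 0 0"] by simp
  then have "A 0 0 = 1 \<or> A 0 0 = \<xi>" by simp
  moreover have "A 0 0 \<noteq> 1" using x0 xi1 by auto
  ultimately have "A 0 0 = \<xi>" by simp
  then have x3: "\<xi> ^ 3 = \<xi>" using x0 by simp
  have "\<xi> * (\<xi> - 1) * (\<xi> + 1) = \<xi> ^ 3 - \<xi>" by (simp add: algebra_simps power3_eq_cube)
  then have "\<xi> * (\<xi> - 1) * (\<xi> + 1) = 0" using x3 by simp
  then have c0: "A 0 0 = -1" using xi0 xi1 \<open>A 0 0 = \<xi>\<close> by (simp add: add_eq_0_iff) (metis minus_minus)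
  have det1: "A 1 1 * A 2 2 - A 2 1 * A 1 2 = 1" using det c0 by simp
  have "(1 - A 0 0) * ((1 - A 1 1) * (1 - A 2 2) - A 2 1 * A 1 2) = (1 - 1)^2 * (1 - \<xi>)" by (rule E)
  then have "(1 - A 1 1) * (1 - A 2 2) - A 2 1 * A 1 2 = 0" using c0 by simp
  moreover have "(1 - A 1 1) * (1 - A 2 2) - A 2 1 * A 1 2 - (A 1 1 * A 2 2 - A 2 1 * A 1 2 - 1) = 2 - (A 1 1 + A 2 2)"
    by (simp add: algebra_simps)
  ultimately have tr: "A 1 1 + A 2 2 = 2" using det1 by simp
  have rL: "r (L c0 c1 c2) = L (- c0 + c1 * A 0 1 + c2 * A 0 2) (c1 * A 1 1 + c2 * A 1 2) (c1 * A 2 1 + c2 * A 2 2)"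
    for c0 c1 c2
    unfolding hom_L[OF H] rV A10 A20 c0 L_smult L_add by simp
  define b where "b = A 1 1"
  define d where "d = A 2 1"
  define b' where "b' = A 1 2"
  define d' where "d' = A 2 2"
  have i1: "(1 + of_nat k * (b - 1)) * b + (of_nat k * d) * b' = 1 + of_nat (Suc k) * (b - 1)"
    and i2: "(1 + of_nat k * (b - 1)) * d + (of_nat k * d) * d' = of_nat (Suc k) * d"
    and i3: "(of_nat k * b') * b + (1 + of_nat k * (d' - 1)) * b' = of_nat (Suc k) * b'"
    and i4: "(of_nat k * b') * d + (1 + of_nat k * (d' - 1)) * d' = 1 + of_nat (Suc k) * (d' - 1)" for k
  proof -
    have e1: "d' = 2 - b" using tr unfolding b_def d'_def by (simp add: algebra_simps)
    have e2: "b' * d = b * d' - 1" using det1 unfolding b_def d'_def b'_def d_def by (simp add: algebra_simps)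
    have e3: "b' * d = - ((b - 1) ^ 2)" unfolding e2 e1 by (simp add: algebra_simps power2_eq_square)
    have e4: "b' * d = - ((d' - 1) ^ 2)" unfolding e3 e1 by (simp add: algebra_simps power2_eq_square)
    have "(1 + of_nat k * (b - 1)) * b + (of_nat k * d) * b' - (1 + of_nat (Suc k) * (b - 1))
          = of_nat k * ((b - 1) ^ 2 + b' * d)" by (simp add: algebra_simps power2_eq_square)
    then show "(1 + of_nat k * (b - 1)) * b + (of_nat k * d) * b' = 1 + of_nat (Suc k) * (b - 1)"
      unfolding e3 by simp
    have "(1 + of_nat k * (b - 1)) * d + (of_nat k * d) * d' - of_nat (Suc k) * d
          = of_nat k * d * (b + d' - 2)" by (simp add: algebra_simps)
    then show "(1 + of_nat k * (b - 1)) * d + (of_nat k * d) * d' = of_nat (Suc k) * d"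
      using e1 by simp
    have "(of_nat k * b') * b + (1 + of_nat k * (d' - 1)) * b' - of_nat (Suc k) * b'
          = of_nat k * b' * (b + d' - 2)" by (simp add: algebra_simps)
    then show "(of_nat k * b') * b + (1 + of_nat k * (d' - 1)) * b' = of_nat (Suc k) * b'"
      using e1 by simp
    have "(of_nat k * b') * d + (1 + of_nat k * (d' - 1)) * d' - (1 + of_nat (Suc k) * (d' - 1))
          = of_nat k * ((d' - 1) ^ 2 + b' * d)" by (simp add: algebra_simps power2_eq_square)
    then show "(of_nat k * b') * d + (1 + of_nat k * (d' - 1)) * d' = 1 + of_nat (Suc k) * (d' - 1)"
      unfolding e4 by simp
  qed
  have it: "\<exists>p q. (r ^^ k) (Var 1) = L p (1 + of_nat k * (b - 1)) (of_nat k * d) \<and>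
                 (r ^^ k) (Var 2) = L q (of_nat k * b') (1 + of_nat k * (d' - 1))" for k
  proof (induction k)
    case 0 then show ?case by (simp add: Var_L, blast)
  next
    case (Suc k)
    then obtain p q where pq: "(r ^^ k) (Var 1) = L p (1 + of_nat k * (b - 1)) (of_nat k * d)"
       "(r ^^ k) (Var 2) = L q (of_nat k * b') (1 + of_nat k * (d' - 1))" by blast
    have "(r ^^ Suc k) (Var 1) = r ((r ^^ k) (Var 1))" by simp
    also have "\<dots> = L (- p + (1 + of_nat k * (b - 1)) * A 0 1 + (of_nat k * d) * A 0 2) (1 + of_nat (Suc k) * (b - 1)) (of_nat (Suc k) * d)"
      unfolding pq rL using i1[of k] i2[of k] unfolding b_def d_def b'_def d'_def by simp
    finally have 1: "(r ^^ Suc k) (Var 1) = L (- p + (1 + of_nat k * (b - 1)) * A 0 1 + (of_nat k * d) * A 0 2) (1 + of_nat (Suc k) * (b - 1)) (of_nat (Suc k) * d)" .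
    have "(r ^^ Suc k) (Var 2) = r ((r ^^ k) (Var 2))" by simp
    also have "\<dots> = L (- q + (of_nat k * b') * A 0 1 + (1 + of_nat k * (d' - 1)) * A 0 2) (of_nat (Suc k) * b') (1 + of_nat (Suc k) * (d' - 1))"
      unfolding pq rL using i3[of k] i4[of k] unfolding b_def d_def b'_def d'_def by simp
    finally have 2: "(r ^^ Suc k) (Var 2) = L (- q + (of_nat k * b') * A 0 1 + (1 + of_nat k * (d' - 1)) * A 0 2) (of_nat (Suc k) * b') (1 + of_nat (Suc k) * (d' - 1))" .
    show ?case using 1 2 by blast
  qed
  obtain n where n: "n > 0" "r ^^ n = id" using ord by blast
  obtain p q where pq: "Var 1 = L p (1 + of_nat n * (b - 1)) (of_nat n * d)"
       "Var 2 = L q (of_nat n * b') (1 + of_nat n * (d' - 1))" using it[of n] n(2) by auto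
  have nz: "(of_nat n :: 'a) \<noteq> 0" using n(1) by simp
  have "1 + of_nat n * (b - 1) = 1" "of_nat n * d = 0"
    using L_inj[OF pq(1)[unfolded Var_L(2)]] by auto
  then have bd: "b = 1" "d = 0" using nz by auto
  have "of_nat n * b' = 0" "1 + of_nat n * (d' - 1) = 1"
    using L_inj[OF pq(2)[unfolded Var_L(3)]] by auto
  then have bd': "b' = 0" "d' = 1" using nz by auto
  have "r (Var 0) = - Var 0" unfolding rV A10 A20 c0 by (simp add: L_def Const_minus)
  moreover have "r (Var 1) = Var 1 + Const (A 0 1) * Var 0"
    using bd unfolding rV b_def d_def by (simp add: L_def)
  moreover have "r (Var 2) = Var 2 + Const (A 0 2) * Var 0"
    using bd' unfolding rV b'_def d'_def by (simp add: L_def)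
  ultimately show ?thesis by blast
qed
end



lemma hom_ext:
  fixes \<phi> \<psi> :: "'a::comm_ring_1 P3 \<Rightarrow> 'a P3"
  assumes "\<And>a b. \<phi> (a + b) = \<phi> a + \<phi> b" "\<And>a b. \<phi> (a * b) = \<phi> a * \<phi> b"
    "\<And>a b. \<psi> (a + b) = \<psi> a + \<psi> b" "\<And>a b. \<psi> (a * b) = \<psi> a * \<psi> b"
    "\<And>c. \<phi> (Const c) = \<psi> (Const c)" "\<And>i. \<phi> (Var i) = \<psi> (Var i)"
  shows "\<phi> p = \<psi> p"
  by (induction p rule: P3_induct) (simp_all add: assms)

definition s0 :: "3 \<Rightarrow>\<^sub>0 nat" where "s0 = Poly_Mapping.single 0 1"

lemma Var0_s0: "Var 0 = Poly_Mapping.single s0 1" by (simp add: Var_def s0_def)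

lemma lookup_Var0_mult:
  "Poly_Mapping.lookup (Var 0 * (v::'a::comm_ring_1 P3)) m =
     (if Poly_Mapping.lookup m 0 = 0 then 0 else Poly_Mapping.lookup v (m - s0))"
proof (induction v rule: update_induct)
  case const then show ?case by simp
next
  case (update f a b)
  have key: "(s0 + a = m) \<longleftrightarrow> (Poly_Mapping.lookup m 0 \<noteq> 0 \<and> a = m - s0)"
  proof
    assume h: "s0 + a = m"
    have "Poly_Mapping.lookup m 0 = Poly_Mapping.lookup a 0 + 1" unfolding h[symmetric] s0_def
      by (simp add: lookup_add)
    moreover have "m - s0 = a" unfolding h[symmetric] by simp
    ultimately show "Poly_Mapping.lookup m 0 \<noteq> 0 \<and> a = m - s0" by simp
  next
    assume h: "Poly_Mapping.lookup m 0 \<noteq> 0 \<and> a = m - s0"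
    show "s0 + a = m"
    proof (rule poly_mapping_eqI)
      fix i
      show "Poly_Mapping.lookup (s0 + a) i = Poly_Mapping.lookup m i"
        using h by (cases "i = 0") (auto simp: lookup_add lookup_minus s0_def lookup_single when_def)
    qed
  qed
  have "Var 0 * Poly_Mapping.update a b f = Var 0 * f + Poly_Mapping.single (s0 + a) b"
    by (simp add: update_eq_add[OF update(1)] distrib_left Var0_s0 mult_single)
  then show ?case using update(3) key
    by (auto simp: lookup_add lookup_single when_def update_eq_add[OF update(1)])
qed

definition R0 :: "'a::comm_ring_1 P3 \<Rightarrow> 'a P3" where
  "R0 p = Poly_Mapping.mapp (\<lambda>m c. if Poly_Mapping.lookup m 0 = 0 then c else 0) p"

lemma lookup_R0: "Poly_Mapping.lookup (R0 p) m = (if Poly_Mapping.lookup m 0 = 0 then Poly_Mapping.lookup p m else 0)"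
  by (simp add: R0_def lookup_mapp when_def in_keys_iff)

lemma R0_add: "R0 (p + q) = R0 p + R0 q"
  by (rule poly_mapping_eqI) (simp add: lookup_R0 lookup_add)

lemma R0_Var0_mult: "R0 (Var 0 * q) = 0"
  by (rule poly_mapping_eqI) (simp add: lookup_R0 lookup_Var0_mult)

lemma R0_zero_dvd:
  assumes "R0 p = 0" shows "\<exists>v. p = Var 0 * v"
proof -
  have fin: "finite {m. Poly_Mapping.lookup p (m + s0) \<noteq> 0}"
  proof -
    have "{m. Poly_Mapping.lookup p (m + s0) \<noteq> 0} \<subseteq> (\<lambda>k. k - s0) ` Poly_Mapping.keys p"
    proof
      fix m assume "m \<in> {m. Poly_Mapping.lookup p (m + s0) \<noteq> 0}"
      then have "m + s0 \<in> Poly_Mapping.keys p" by (simp add: in_keys_iff)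
      then show "m \<in> (\<lambda>k. k - s0) ` Poly_Mapping.keys p" by (metis add_diff_cancel_right' image_eqI)
    qed
    then show ?thesis by (rule finite_subset) simp
  qed
  define v where "v = Abs_poly_mapping (\<lambda>m. Poly_Mapping.lookup p (m + s0))"
  have lv: "Poly_Mapping.lookup v m = Poly_Mapping.lookup p (m + s0)" for m
    unfolding v_def using fin by simp
  have "p = Var 0 * v"
  proof (rule poly_mapping_eqI)
    fix m
    show "Poly_Mapping.lookup p m = Poly_Mapping.lookup (Var 0 * v) m"
    proof (cases "Poly_Mapping.lookup m 0 = 0")
      case True
      then show ?thesis using arg_cong[OF assms, of "\<lambda>q. Poly_Mapping.lookup q m"]
        by (simp add: lookup_R0 lookup_Var0_mult)
    next
      case False
      have "m - s0 + s0 = m"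
      proof (rule poly_mapping_eqI)
        fix i
        show "Poly_Mapping.lookup (m - s0 + s0) i = Poly_Mapping.lookup m i"
          using False by (cases "i = 0") (auto simp: lookup_add lookup_minus s0_def lookup_single when_def)
      qed
      then show ?thesis using False by (simp add: lookup_Var0_mult lv)
    qed
  qed
  then show ?thesis by blast
qed

lemma R0_decomp: "\<exists>v. p = R0 p + Var 0 * v"
proof -
  have "R0 (p - R0 p) = 0"
    by (rule poly_mapping_eqI) (simp add: lookup_R0 lookup_minus)
  then obtain v where "p - R0 p = Var 0 * v" using R0_zero_dvd by blast
  then show ?thesis by (metis add_diff_cancel_left' diff_add_cancel add.commute)
qed

lemma R0_R0: "R0 (R0 p) = R0 p"
  by (rule poly_mapping_eqI) (simp add: lookup_R0)

lemma R0_mult_pure: assumes "R0 p = p" "R0 q = q" shows "R0 (p * q) = p * q"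
proof (rule poly_mapping_eqI)
  fix m
  show "Poly_Mapping.lookup (R0 (p * q)) m = Poly_Mapping.lookup (p * q) m"
  proof (cases "Poly_Mapping.lookup m 0 = 0")
    case False
    have "m \<notin> Poly_Mapping.keys (p * q)"
    proof
      assume "m \<in> Poly_Mapping.keys (p * q)"
      then obtain a b where ab: "m = a + b" "a \<in> Poly_Mapping.keys p" "b \<in> Poly_Mapping.keys q"
        using keys_mult by blast
      have "Poly_Mapping.lookup a 0 = 0"
        using ab(2) arg_cong[OF assms(1), of "\<lambda>q. Poly_Mapping.lookup q a"]
        by (auto simp: lookup_R0 in_keys_iff split: if_splits)
      moreover have "Poly_Mapping.lookup b 0 = 0"
        using ab(3) arg_cong[OF assms(2), of "\<lambda>q. Poly_Mapping.lookup q b"]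
        by (auto simp: lookup_R0 in_keys_iff split: if_splits)
      ultimately show False using False ab(1) by (simp add: lookup_add)
    qed
    then show ?thesis using False by (simp add: lookup_R0 in_keys_iff)
  qed (simp add: lookup_R0)
qed

lemma R0_mult: "R0 (p * q) = R0 p * R0 q"
proof -
  obtain v w where v: "p = R0 p + Var 0 * v" and w: "q = R0 q + Var 0 * w" using R0_decomp by metis
  have "p * q = R0 p * R0 q + Var 0 * (v * R0 q + R0 p * w + Var 0 * v * w)"
    by (subst v, subst w) (simp add: algebra_simps)
  then have "R0 (p * q) = R0 (R0 p * R0 q)" by (simp add: R0_add R0_Var0_mult)
  also have "\<dots> = R0 p * R0 q" by (rule R0_mult_pure) (simp_all add: R0_R0)
  finally show ?thesis .
qed

lemma R0_Const: "R0 (Const c) = Const c"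
  by (rule poly_mapping_eqI) (simp add: lookup_R0 Const_def lookup_single when_def)

lemma R0_Var0: "R0 (Var 0) = 0"
  using R0_Var0_mult[of 1] by simp

lemma R0_Var: "i \<noteq> 0 \<Longrightarrow> R0 (Var i) = Var i"
  by (rule poly_mapping_eqI) (auto simp: lookup_R0 Var_def lookup_single when_def)

lemma R0_neg: "R0 (- p) = - R0 p"
  by (rule poly_mapping_eqI) (simp add: lookup_R0)

lemma R0_one: "R0 1 = (1 :: 'a::comm_ring_1 P3)"
  using R0_Const[of 1] by simp

lemma Var0_not_unit: "1 \<noteq> Var 0 * (s :: 'a::comm_ring_1 P3)"
proof
  assume "1 = Var 0 * s"
  then have "R0 1 = R0 (Var 0 * s)" by simp
  then show False by (simp add: R0_one R0_Var0_mult)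
qed

lemma Var0_nz: "Var 0 \<noteq> (0 :: 'a::comm_ring_1 P3)"
  by (metis Var_def lookup_single_eq lookup_zero one_neq_zero)




lemma neg_self_zero: "(x::'b::{ring_char_0, ring_no_zero_divisors}) = - x \<Longrightarrow> x = 0"
proof -
  assume h: "x = - x"
  have "x + x = - x + x" using h by (rule arg_cong[where f="\<lambda>y. y + x"])
  then have "x + x = 0" by simp
  then have "2 * x = 0" by (simp only: mult_2)
  then show "x = 0" by simp
qed

lemma gen_comp: "g \<in> gen_by R \<Longrightarrow> h \<in> gen_by R \<Longrightarrow> g \<circ> h \<in> gen_by R"
  by (induction rule: gen_by.induct) (auto simp: comp_assoc intro: gen_by.intros)

lemma gen_pow: "g \<in> gen_by R \<Longrightarrow> g ^^ k \<in> gen_by R"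
  by (induction k) (auto intro: gen_by.intros gen_comp)

lemma gen_empty: "gen_by {} = {id}"
proof
  show "gen_by {} \<subseteq> {id}"
  proof
    fix g assume "g \<in> gen_by {}" then show "g \<in> {id}" by (induction rule: gen_by.induct) auto
  qed
qed (auto intro: gen_by.intros)

lemma gen_single: "r \<in> R \<Longrightarrow> r \<in> gen_by R"
  using gen_by.gen_step[OF _ gen_by.gen_id] by fastforce

context PB begin

lemma refl_L:
  assumes H: "r \<in> PAut_gr br" and re: "r (Var 0) = - Var 0" "r (Var 1) = Var 1 + Const e * Var 0"
     "r (Var 2) = Var 2 + Const e' * Var 0"
  shows "r (L c0 c1 c2) = L (- c0 + c1 * e + c2 * e') c1 c2"
proof -
  have "r (L c0 c1 c2) = Const c0 * r (Var 0) + Const c1 * r (Var 1) + Const c2 * r (Var 2)"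
    by (rule hom_L[OF H])
  also have "\<dots> = L (- c0 + c1 * e + c2 * e') c1 c2"
    unfolding re L_def by (simp add: Const_add Const_mult Const_minus Const_diff algebra_simps)
  finally show ?thesis .
qed

lemma refl_unique:
  assumes G: "G = gen_by R" and fin: "finite G" and r0R: "r0 \<in> R" and rR: "r \<in> R"
    and Rr: "\<forall>r\<in>R. poisson_reflection br r"
  shows "r = r0"
proof -
  have H0: "r0 \<in> PAut_gr br" and H: "r \<in> PAut_gr br"
    using Rr r0R rR unfolding poisson_reflection_def by blast+
  obtain a a' where r0: "r0 (Var 0) = - Var 0" "r0 (Var 1) = Var 1 + Const a * Var 0" "r0 (Var 2) = Var 2 + Const a' * Var 0"
    using refl_form Rr r0R by blast
  obtain e e' where re: "r (Var 0) = - Var 0" "r (Var 1) = Var 1 + Const e * Var 0" "r (Var 2) = Var 2 + Const e' * Var 0"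
    using refl_form Rr rR by blast
  define g where "g = r0 \<circ> r"
  have gG: "g \<in> G" unfolding G g_def by (rule gen_comp[OF gen_single[OF r0R] gen_single[OF rR]])
  have gL: "g (L c0 c1 c2) = L (c0 + (c1 * (a - e) + c2 * (a' - e'))) c1 c2" for c0 c1 c2
  proof -
    have "g (L c0 c1 c2) = r0 (L (- c0 + c1 * e + c2 * e') c1 c2)" unfolding g_def by (simp add: refl_L[OF H re])
    also have "\<dots> = L (- (- c0 + c1 * e + c2 * e') + c1 * a + c2 * a') c1 c2" by (rule refl_L[OF H0 r0])
    also have "- (- c0 + c1 * e + c2 * e') + c1 * a + c2 * a' = c0 + (c1 * (a - e) + c2 * (a' - e'))"
      by (simp add: algebra_simps)
    finally show ?thesis .
  qed
  have gk: "(g ^^ k) (L c0 c1 c2) = L (c0 + of_nat k * (c1 * (a - e) + c2 * (a' - e'))) c1 c2" for k c0 c1 c2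
  proof (induction k)
    case 0 then show ?case by simp
  next
    case (Suc k)
    have "(g ^^ Suc k) (L c0 c1 c2) = g ((g ^^ k) (L c0 c1 c2))" by simp
    also have "\<dots> = L (c0 + of_nat k * (c1 * (a - e) + c2 * (a' - e')) + (c1 * (a - e) + c2 * (a' - e'))) c1 c2"
      unfolding Suc gL ..
    also have "c0 + of_nat k * (c1 * (a - e) + c2 * (a' - e')) + (c1 * (a - e) + c2 * (a' - e'))
       = c0 + of_nat (Suc k) * (c1 * (a - e) + c2 * (a' - e'))" by (simp add: algebra_simps)
    finally show ?case .
  qed
  have "\<not> inj (\<lambda>k::nat. g ^^ k)"
  proof
    assume "inj (\<lambda>k::nat. g ^^ k)"
    moreover have "finite (range (\<lambda>k::nat. g ^^ k))"
      by (rule finite_subset[OF _ fin]) (use gG in \<open>auto simp: G intro: gen_pow\<close>)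
    ultimately have "finite (UNIV :: nat set)" using finite_imageD by blast
    then show False by simp
  qed
  then obtain i j :: nat where ij: "i \<noteq> j" "g ^^ i = g ^^ j" unfolding inj_def by blast
  have nz: "(of_nat i :: 'a) - of_nat j \<noteq> 0" using ij(1) by simp
  have "(g ^^ i) (L 0 1 0) = (g ^^ j) (L 0 1 0)" using ij(2) by simp
  then have "of_nat i * (a - e) = of_nat j * (a - e)" unfolding gk by (auto dest!: L_inj)
  then have "(of_nat i - of_nat j) * (a - e) = 0" by (simp add: algebra_simps)
  then have ae: "e = a" using nz by simp
  have "(g ^^ i) (L 0 0 1) = (g ^^ j) (L 0 0 1)" using ij(2) by simp
  then have "of_nat i * (a' - e') = of_nat j * (a' - e')" unfolding gk by (auto dest!: L_inj)
  then have "(of_nat i - of_nat j) * (a' - e') = 0" by (simp add: algebra_simps)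
  then have ae': "e' = a'" using nz by simp
  show ?thesis
  proof
    fix p
    show "r p = r0 p"
    proof (rule hom_ext[of r r0])
      fix i :: 3
      show "r (Var i) = r0 (Var i)" using exhaust3[of i] re r0 ae ae' by auto
    qed (simp_all add: hom_facts[OF H] hom_facts[OF H0])
  qed
qed

lemma main:
  assumes gen: "\<exists>R. (\<forall>r\<in>R. poisson_reflection br r) \<and> G = gen_by R" and fin: "finite G"
    and nontriv: "G \<noteq> {id}"
  shows "\<not> (\<exists>\<psi>. poisson_iso_onto_P br (invariants G) \<psi>)"
proof
  obtain R where Rr: "\<forall>r\<in>R. poisson_reflection br r" and G: "G = gen_by R" using gen by blast
  have "R \<noteq> {}" using nontriv G gen_empty by auto
  then obtain r0 where r0R: "r0 \<in> R" by blast
  have H0: "r0 \<in> PAut_gr br" using Rr r0R unfolding poisson_reflection_def by blast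
  obtain a a' where r0: "r0 (Var 0) = - Var 0" "r0 (Var 1) = Var 1 + Const a * Var 0" "r0 (Var 2) = Var 2 + Const a' * Var 0"
    using refl_form Rr r0R by blast
  have uniq: "r = r0" if "r \<in> R" for r using refl_unique[OF G fin r0R that Rr] .
  have inv: "invariants G = {p. r0 p = p}"
  proof
    show "invariants G \<subseteq> {p. r0 p = p}" using gen_single[OF r0R] unfolding invariants_def G by blast
    show "{p. r0 p = p} \<subseteq> invariants G"
    proof
      fix p assume p: "p \<in> {p. r0 p = p}"
      have "g p = p" if "g \<in> gen_by R" for g
        using that by (induction rule: gen_by.induct) (use p uniq in auto)
      then show "p \<in> invariants G" unfolding invariants_def G by blast
    qed
  qed
  define A where "A = invariants G"
  have Amem: "p \<in> A \<longleftrightarrow> r0 p = p" for p unfolding A_def inv by simp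
  have A_Const: "Const c \<in> A" for c using hom_facts(3)[OF H0] Amem by simp
  have A_mult: "p * q \<in> A" if "p \<in> A" "q \<in> A" for p q using that hom_facts(2)[OF H0] Amem by simp
  have A_br: "br p q \<in> A" if "p \<in> A" "q \<in> A" for p q using that hom_facts(4)[OF H0] Amem by simp
  define y where "y = L (a / 2) 1 0"
  define z where "z = L (a' / 2) 0 1"
  have yA: "y \<in> A" unfolding Amem y_def refl_L[OF H0 r0] by simp
  have zA: "z \<in> A" unfolding Amem z_def refl_L[OF H0 r0] by simp
  have byz: "br y z = Const 3 * Var 0 ^ 2" unfolding y_def z_def br_L by simp
  have R0r0: "R0 (r0 p) = R0 p" for p
  proof (rule hom_ext[of "\<lambda>p. R0 (r0 p)" R0])
    fix i :: 3
    have "R0 (Const c * Var 0) = 0" for c using R0_Var0_mult[of "Const c"] by (simp add: mult.commute)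
    then show "R0 (r0 (Var i)) = R0 (Var i)" using exhaust3[of i] r0
      by (auto simp: R0_add R0_neg R0_Var0)
  qed (simp_all add: hom_facts[OF H0] R0_add R0_mult)
  have keyA: "\<exists>w\<in>A. u = (Const (1/3) * w) * br y z"
    if u: "u \<in> A" and abc: "a1 \<in> A" "b1 \<in> A" "c1 \<in> A" and uu: "u * u = c1 * br a1 b1" for u a1 b1 c1
  proof -
    obtain q where q: "br a1 b1 = Var 0 ^ 2 * q" using Dx_br unfolding Dx_def by blast
    have "u * u = Var 0 * (Var 0 * q * c1)" unfolding uu q by (simp add: power2_eq_square algebra_simps)
    then have "R0 u * R0 u = 0" by (simp add: R0_mult[symmetric] R0_Var0_mult)
    then have "R0 u = 0" by simp
    then obtain v where v: "u = Var 0 * v" using R0_zero_dvd by blast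
    have "r0 u = u" using u Amem by simp
    then have "- Var 0 * r0 v = Var 0 * v" unfolding v hom_facts(2)[OF H0] r0 .
    then have h: "Var 0 * v = - (Var 0 * r0 v)" by simp
    have "Var 0 * (r0 v + v) = Var 0 * r0 v + Var 0 * v" by (rule distrib_left)
    also have "\<dots> = 0" unfolding h by simp
    finally have "Var 0 * (r0 v + v) = 0" .
    then have "r0 v + v = 0" using Var0_nz by (metis mult_eq_0_iff)
    then have "r0 v = - v" by (simp add: eq_neg_iff_add_eq_0)
    then have "R0 v = - R0 v" using R0r0[of v] by (simp add: R0_neg)
    then have "R0 v = 0" by (rule neg_self_zero)
    then obtain w where w: "v = Var 0 * w" using R0_zero_dvd by blast
    have uw: "u = Var 0 ^ 2 * w" unfolding v w by (simp add: power2_eq_square)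
    have "r0 u = Var 0 ^ 2 * r0 w" unfolding uw hom_facts(2)[OF H0] hom_more(5)[OF H0] r0 by simp
    then have "Var 0 ^ 2 * r0 w = Var 0 ^ 2 * w" using \<open>r0 u = u\<close> uw by simp
    moreover have "Var 0 ^ 2 \<noteq> (0 :: 'a P3)" using Var0_nz by simp
    ultimately have "r0 w = w" by (metis mult_left_cancel)
    then have wA: "w \<in> A" using Amem by simp
    have "(Const (1/3) * w) * br y z = (Const (1/3) * Const 3) * (Var 0 ^ 2 * w)"
      unfolding byz by (simp add: algebra_simps)
    also have "Const (1/3) * Const 3 = (1 :: 'a P3)" by (simp add: Const_mult[symmetric])
    finally have e: "(Const (1/3) * w) * br y z = 1 * (Var 0 ^ 2 * w)" .
    have "u = (Const (1/3) * w) * br y z" unfolding e uw by simp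
    then show ?thesis using wA by blast
  qed
  assume "\<exists>\<psi>. poisson_iso_onto_P br (invariants G) \<psi>"
  then obtain \<psi> where iso: "poisson_iso_onto_P br A \<psi>" unfolding A_def by blast
  have bij: "bij_betw \<psi> A UNIV" and padd: "\<And>p q. p \<in> A \<Longrightarrow> q \<in> A \<Longrightarrow> \<psi> (p + q) = \<psi> p + \<psi> q"
    and pmul: "\<And>p q. p \<in> A \<Longrightarrow> q \<in> A \<Longrightarrow> \<psi> (p * q) = \<psi> p * \<psi> q"
    and pc: "\<And>c. \<psi> (Const c) = Const c"
    and pbr: "\<And>p q. p \<in> A \<Longrightarrow> q \<in> A \<Longrightarrow> \<psi> (br p q) = br (\<psi> p) (\<psi> q)"
    using iso unfolding poisson_iso_onto_P_def by blast+
  have surj: "\<exists>p\<in>A. \<psi> p = t" for t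
  proof -
    have "t \<in> \<psi> ` A" using bij unfolding bij_betw_def by simp
    then show ?thesis by blast
  qed
  obtain u where uA: "u \<in> A" and u: "\<psi> u = Var 0" using surj by blast
  obtain a1 where a1A: "a1 \<in> A" and a1: "\<psi> a1 = Var 1" using surj by blast
  obtain b1 where b1A: "b1 \<in> A" and b1: "\<psi> b1 = Var 2" using surj by blast
  have "\<psi> (Const (1/3) * br a1 b1) = Const (1/3) * (Const 3 * Var 0 ^ 2)"
    using pmul[OF A_Const A_br[OF a1A b1A]] pbr[OF a1A b1A] a1 b1 pc b23 by simp
  also have "\<dots> = Var 0 ^ 2" by (simp add: mult.assoc[symmetric] Const_mult[symmetric])
  also have "\<dots> = \<psi> (u * u)" using pmul[OF uA uA] u by (simp add: power2_eq_square)
  finally have "u * u = Const (1/3) * br a1 b1"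
    using bij unfolding bij_betw_def inj_on_def
    by (metis A_mult A_Const A_br uA a1A b1A)
  then obtain w where wA: "w \<in> A" and uw: "u = (Const (1/3) * w) * br y z"
    using keyA[OF uA a1A b1A A_Const] by blast
  have "Var 0 = \<psi> (Const (1/3) * w) * br (\<psi> y) (\<psi> z)"
    using u pmul[OF A_mult[OF A_Const wA] A_br[OF yA zA]] pbr[OF yA zA] uw by simp
  moreover obtain q where "br (\<psi> y) (\<psi> z) = Var 0 ^ 2 * q" using Dx_br unfolding Dx_def by blast
  ultimately have "Var 0 = Var 0 * (Var 0 * (\<psi> (Const (1/3) * w) * q))"
    by (simp add: power2_eq_square algebra_simps)
  then have "Var 0 * (1 - Var 0 * (\<psi> (Const (1/3) * w) * q)) = 0" by (simp add: algebra_simps)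
  then have "1 - Var 0 * (\<psi> (Const (1/3) * w) * q) = 0" using Var0_nz by (metis mult_eq_0_iff)
  then have "1 = Var 0 * (\<psi> (Const (1/3) * w) * q)" by (metis right_minus_eq)
  then show False using Var0_not_unit by blast
qed

end

theorem lemma3p1p2:
  fixes br :: "'a::field_char_0 P3 \<Rightarrow> 'a P3 \<Rightarrow> 'a P3"
    and G :: "('a P3 \<Rightarrow> 'a P3) set"
  assumes alg_closed: "\<And>p :: 'a poly. degree p > 0 \<Longrightarrow> \<exists>x. poly p x = 0"
    and pb: "poisson_bracket br"
    and b12: "br (Var 0) (Var 1) = 0"
    and b23: "br (Var 1) (Var 2) = Const 3 * Var 0 ^ 2"
    and b31: "br (Var 2) (Var 0) = 0"
    and gen: "\<exists>R. (\<forall>r\<in>R. poisson_reflection br r) \<and> G = gen_by R"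
    and fin: "finite G"
    and nontriv: "G \<noteq> {id}"
  shows "\<not> (\<exists>\<psi>. poisson_iso_onto_P br (invariants G) \<psi>)"
proof -
  interpret PB br using pb b12 b23 b31 by unfold_locales
  show ?thesis by (rule main[OF gen fin nontriv])
qed

end
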